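(* Consider the discrete-time nonlinear system $x^+=AM(x)+Bu$ with (unknown) $A\in\mathbb{R}^{n\times N}$, $B\in\mathbb{R}^{n\times m}$, $M(x)=\begin{bmatrix}x\\ \mathcal{Z}(x)\end{bmatrix}\in\mathbb{R}^N$, $\mathcal{Z}:\mathbb{R}^n\to\mathbb{R}^{N-n}$, state set $X\subset\mathbb{R}^n$, initial set $X_{\mathcal I}\subset X$ and unsafe set $X_{\mathcal U}\subset X$. Let $\mathcal{U}_0=[u(0),\dots,u(T-1)]$, $\mathcal{X}_1=[x(1),\dots,x(T)]$ and $\mathcal{M}_0=[M(x(0)),\dots,M(x(T-1))]$ be built from a single trajectory $x(t+1)=AM(x(t))+Bu(t)$, with $\mathcal{M}_0$ of full row rank, and let $Q=[Q_1~Q_2]\in\mathbb{R}^{T\times N}$ ($Q_1\in\mathbb{R}^{T\times n}$, $Q_2\in\mathbb{R}^{T\times(N-n)}$) satisfy $\mathcal{M}_0Q=\mathbb{I}_N$ and $\mathcal{X}_1Q_2=\mathbf{0}_{n\times(N-n)}$. Suppose there exist a symmetric positive-definite $P\in\mathbb{R}^{n\times n}$, $k\in\mathbb{N}_{>0}$, and $\gamma,\lambda,\epsilon\in\mathbb{R}_{\ge0}$ with $\lambda>\gamma+(k-1)\epsilon$ such that (i) $x^\top Px\le\gamma$ for all $x\in X_{\mathcal I}$; (ii) $x^\top Px\ge\lambda$ for all $x\in X_{\mathcal U}$; (iii) $x^\top Q_1^\top\mathcal{X}_1^\top P\mathcal{X}_1Q_1x\le x^\top Px+\epsilon$ for all $x\in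 X$; (iv) $((\mathcal{X}_1Q_1)^k)^\top P(\mathcal{X}_1Q_1)^k\preceq P$. Then $\mathcal{B}(x)=x^\top Px$ is a $k$-inductive control barrier certificate and $u=\mathcal{U}_0QM(x)$ a corresponding safety controller; that is, $\mathcal{B}\le\gamma$ on $X_{\mathcal I}$, $\mathcal{B}\ge\lambda$ on $X_{\mathcal U}$, and for all $x\in X$, with $x^+=AM(x)+B\,\mathcal{U}_0QM(x)$ and $x^{k+}$ the state after $k$ steps of this closed loop, $\mathcal{B}(x^+)\le\mathcal{B}(x)+\epsilon$ and $\mathcal{B}(x^{k+})\le\mathcal{B}(x)$.
   Context: $\preceq$ is the Loewner order. A function $\mathcal{B}:X\to\mathbb{R}_{\ge0}$ is a $k$-inductive control barrier certificate ($k$-CBC) if there are $k\in\mathbb{N}_{>0}$, $\gamma,\lambda,\epsilon\ge0$ with $\lambda>\gamma+(k-1)\epsilon$ such that $\mathcal{B}\le\gamma$ on $X_{\mathcal I}$, $\mathcal{B}\ge\lambda$ on $X_{\mathcal U}$, and for all $x\in X$ there is an input with $\mathcal{B}(x^+)\le\mathcal{B}(x)+\epsilon$ and $\mathcal{B}(x^{k+})\le\mathcal{B}(x)$, $x^{k+}$ being the state after $k$ steps; a feedback realizing these is a safety controller. *)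

theory Defs
  imports "Jordan_Normal_Form.Matrix" "Jordan_Normal_Form.DL_Rank"
begin

definition sym_pos_def_mat :: "nat \<Rightarrow> real mat \<Rightarrow> bool" where
  "sym_pos_def_mat n P \<longleftrightarrow> P \<in> carrier_mat n n \<and> transpose_mat P = P \<and>
     (\<forall>v \<in> carrier_vec n. v \<noteq> 0\<^sub>v n \<longrightarrow> v \<bullet> (P *\<^sub>v v) > 0)"

definition loewner_le :: "nat \<Rightarrow> real mat \<Rightarrow> real mat \<Rightarrow> bool" where
  "loewner_le n C D \<longleftrightarrow> C \<in> carrier_mat n n \<and> D \<in> carrier_mat n n \<and>
     (\<forall>v \<in> carrier_vec n. v \<bullet> ((D - C) *\<^sub>v v) \<ge> 0)"

definition kCBC_with_controller ::
  "real vec set \<Rightarrow> real vec set \<Rightarrow> real vec set \<Rightarrow> (real vec \<Rightarrow> real vec \<Rightarrow> real vec)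
   \<Rightarrow> (real vec \<Rightarrow> real) \<Rightarrow> (real vec \<Rightarrow> real vec) \<Rightarrow> nat \<Rightarrow> real \<Rightarrow> real \<Rightarrow> real \<Rightarrow> bool" where
  "kCBC_with_controller X XI XU f Bc c k \<gamma> lam \<epsilon> \<longleftrightarrow>
     k > 0 \<and> \<gamma> \<ge> 0 \<and> lam \<ge> 0 \<and> \<epsilon> \<ge> 0 \<and> lam > \<gamma> + (real k - 1) * \<epsilon> \<and>
     (\<forall>x \<in> X. Bc x \<ge> 0) \<and>
     (\<forall>x \<in> XI. Bc x \<le> \<gamma>) \<and>
     (\<forall>x \<in> XU. Bc x \<ge> lam) \<and>
     (\<forall>x \<in> X. Bc (f x (c x)) \<le> Bc x + \<epsilon> \<and>
               Bc (((\<lambda>y. f y (c y)) ^^ k) x) \<le> Bc x)"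

end

theory Submission
  imports Defs
begin

lemma zero_mat_mult_vec_helper:
  assumes "z \<in> carrier_vec k"
  shows "0\<^sub>m n k *\<^sub>v z = (0\<^sub>v n :: 'a :: semiring_0 vec)"
  using assms by (intro eq_vecI) (auto simp: scalar_prod_def)

theorem theorem3:
  fixes n m N T k :: nat
    and A B P Q :: "real mat"
    and Z :: "real vec \<Rightarrow> real vec"
    and X XI XU :: "real vec set"
    and x u :: "nat \<Rightarrow> real vec"
    and \<gamma> lam \<epsilon> :: real
  defines "M \<equiv> (\<lambda>y. y @\<^sub>v Z y)"
    and "U0 \<equiv> mat m T (\<lambda>(i, j). u j $ i)"
    and "X1 \<equiv> mat n T (\<lambda>(i, j). x (Suc j) $ i)"
    and "M0 \<equiv> mat N T (\<lambda>(i, j). (x j @\<^sub>v Z (x j)) $ i)"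
    and "Q1 \<equiv> mat T n (\<lambda>(i, j). Q $$ (i, j))"
    and "Q2 \<equiv> mat T (N - n) (\<lambda>(i, j). Q $$ (i, n + j))"
  assumes nN: "n \<le> N"
    and A_dim: "A \<in> carrier_mat n N"
    and B_dim: "B \<in> carrier_mat n m"
    and Z_dim: "\<And>y. y \<in> carrier_vec n \<Longrightarrow> Z y \<in> carrier_vec (N - n)"
    and X_sub: "X \<subseteq> carrier_vec n"
    and XI_sub: "XI \<subseteq> X"
    and XU_sub: "XU \<subseteq> X"
    and x0: "x 0 \<in> carrier_vec n"
    and u_dim: "\<And>t. t < T \<Longrightarrow> u t \<in> carrier_vec m"
    and traj: "\<And>t. t < T \<Longrightarrow> x (Suc t) = A *\<^sub>v M (x t) + B *\<^sub>v u t"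
    and M0_rank: "vec_space.rank N M0 = N"
    and Q_dim: "Q \<in> carrier_mat T N"
    and M0Q: "M0 * Q = 1\<^sub>m N"
    and X1Q2: "X1 * Q2 = 0\<^sub>m n (N - n)"
    and P_pd: "sym_pos_def_mat n P"
    and k_pos: "k > 0"
    and \<gamma>_nonneg: "\<gamma> \<ge> 0" and lam_nonneg: "lam \<ge> 0" and \<epsilon>_nonneg: "\<epsilon> \<ge> 0"
    and gap: "lam > \<gamma> + (real k - 1) * \<epsilon>"
    and c1: "\<And>y. y \<in> XI \<Longrightarrow> y \<bullet> (P *\<^sub>v y) \<le> \<gamma>"
    and c2: "\<And>y. y \<in> XU \<Longrightarrow> y \<bullet> (P *\<^sub>v y) \<ge> lam"
    and c3: "\<And>y. y \<in> X \<Longrightarrow>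
              y \<bullet> ((transpose_mat Q1 * transpose_mat X1 * P * X1 * Q1) *\<^sub>v y) \<le> y \<bullet> (P *\<^sub>v y) + \<epsilon>"
    and c4: "loewner_le n (transpose_mat ((X1 * Q1) ^\<^sub>m k) * P * (X1 * Q1) ^\<^sub>m k) P"
  shows "kCBC_with_controller X XI XU (\<lambda>y v. A *\<^sub>v M y + B *\<^sub>v v)
           (\<lambda>y. y \<bullet> (P *\<^sub>v y)) (\<lambda>y. (U0 * Q) *\<^sub>v M y) k \<gamma> lam \<epsilon>"
proof -
  define K where "K = X1 * Q1"
  have X1d: "X1 \<in> carrier_mat n T" and Q1d: "Q1 \<in> carrier_mat T n" and Q2d: "Q2 \<in> carrier_mat T (N - n)"
    and M0d: "M0 \<in> carrier_mat N T" and U0d: "U0 \<in> carrier_mat m T"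
    unfolding X1_def Q1_def Q2_def M0_def U0_def by auto
  have Kd: "K \<in> carrier_mat n n" unfolding K_def using X1d Q1d by auto
  have Pd: "P \<in> carrier_mat n n" using P_pd unfolding sym_pos_def_mat_def by auto
  have Md: "M y \<in> carrier_vec N" if "y \<in> carrier_vec n" for y
    unfolding M_def using append_carrier_vec[OF that Z_dim[OF that]] nN by simp
  have xd0: "t \<le> T \<longrightarrow> x t \<in> carrier_vec n" for t
  proof (induct t)
    case 0 show ?case using x0 by simp
  next
    case (Suc t)
    show ?case
    proof
      assume st: "Suc t \<le> T"
      then have tT: "t < T" by simp
      have e: "x (Suc t) = A *\<^sub>v M (x t) + B *\<^sub>v u t" by (rule traj[OF tT])
      have "dim_vec (A *\<^sub>v M (x t) + B *\<^sub>v u t) = n" using A_dim B_dim by simp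
      then have "dim_vec (x (Suc t)) = n" unfolding e .
      then show "x (Suc t) \<in> carrier_vec n" by (rule carrier_vecI)
    qed
  qed
  have xd: "x t \<in> carrier_vec n" if "t \<le> T" for t using xd0 that by blast
  have colM0: "col M0 j = M (x j)" if "j < T" for j
    using carrier_vecD[OF Md[OF xd[of j]]] that unfolding M0_def M_def
    by (intro eq_vecI) auto
  have colU0: "col U0 j = u j" if "j < T" for j
    using carrier_vecD[OF u_dim[OF that]] that unfolding U0_def
    by (intro eq_vecI) auto
  have X1eq: "X1 = A * M0 + B * U0"
  proof (rule eq_matI)
    fix i j assume ij: "i < dim_row (A * M0 + B * U0)" "j < dim_col (A * M0 + B * U0)"
    then have i: "i < n" and j: "j < T" using A_dim B_dim M0d U0d by auto
    have "(A * M0 + B * U0) $$ (i, j) = row A i \<bullet> col M0 j + row B i \<bullet> col U0 j"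
      using i j A_dim B_dim M0d U0d by auto
    also have "\<dots> = (A *\<^sub>v M (x j) + B *\<^sub>v u j) $ i"
      using i j A_dim B_dim colM0 colU0 by auto
    also have "\<dots> = X1 $$ (i, j)" using traj[OF j] i j unfolding X1_def by simp
    finally show "X1 $$ (i, j) = (A * M0 + B * U0) $$ (i, j)" by simp
  qed (use X1d A_dim B_dim M0d U0d in auto)
  have Qsplit: "Q *\<^sub>v (y @\<^sub>v z) = Q1 *\<^sub>v y + Q2 *\<^sub>v z"
    if y: "y \<in> carrier_vec n" and z: "z \<in> carrier_vec (N - n)" for y z
  proof (rule eq_vecI)
    show "dim_vec (Q *\<^sub>v (y @\<^sub>v z)) = dim_vec (Q1 *\<^sub>v y + Q2 *\<^sub>v z)" using Q_dim Q1d Q2d by auto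
    fix i assume "i < dim_vec (Q1 *\<^sub>v y + Q2 *\<^sub>v z)"
    then have i: "i < T" using Q2d by auto
    have rowQ: "row Q i = row Q1 i @\<^sub>v row Q2 i"
      using i Q_dim nN unfolding Q1_def Q2_def
      by (intro eq_vecI) auto
    have "(Q *\<^sub>v (y @\<^sub>v z)) $ i = row Q i \<bullet> (y @\<^sub>v z)" using i Q_dim by auto
    also have "\<dots> = row Q1 i \<bullet> y + row Q2 i \<bullet> z"
      unfolding rowQ using y z i Q1d Q2d by (intro scalar_prod_append) auto
    also have "\<dots> = (Q1 *\<^sub>v y + Q2 *\<^sub>v z) $ i" using i Q1d Q2d by auto
    finally show "(Q *\<^sub>v (y @\<^sub>v z)) $ i = (Q1 *\<^sub>v y + Q2 *\<^sub>v z) $ i" .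
  qed
  define g where "g = (\<lambda>y. A *\<^sub>v M y + B *\<^sub>v ((U0 * Q) *\<^sub>v M y))"
  have geq: "g y = K *\<^sub>v y" if y: "y \<in> carrier_vec n" for y
  proof -
    have My: "M y \<in> carrier_vec N" using Md[OF y] .
    have zd: "Z y \<in> carrier_vec (N - n)" using Z_dim[OF y] .
    have "A = A * (M0 * Q)" using M0Q A_dim by simp
    also have "\<dots> = (A * M0) * Q" using A_dim M0d Q_dim by simp
    finally have Aeq: "A = (A * M0) * Q" .
    have e1: "A *\<^sub>v M y = ((A * M0) * Q) *\<^sub>v M y" using Aeq by simp
    have e2: "B *\<^sub>v ((U0 * Q) *\<^sub>v M y) = ((B * U0) * Q) *\<^sub>v M y"
      unfolding assoc_mult_mat[OF B_dim U0d Q_dim]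
      by (rule assoc_mult_mat_vec[symmetric, OF B_dim mult_carrier_mat[OF U0d Q_dim] My])
    have "g y = ((A * M0) * Q) *\<^sub>v M y + ((B * U0) * Q) *\<^sub>v M y"
      unfolding g_def e2 using e1 by simp
    also have "\<dots> = ((A * M0) * Q + (B * U0) * Q) *\<^sub>v M y"
      by (rule add_mult_distrib_mat_vec[symmetric, OF mult_carrier_mat[OF mult_carrier_mat[OF A_dim M0d] Q_dim]
           mult_carrier_mat[OF mult_carrier_mat[OF B_dim U0d] Q_dim] My])
    also have "\<dots> = (X1 * Q) *\<^sub>v M y"
      unfolding X1eq
      by (subst add_mult_distrib_mat[OF mult_carrier_mat[OF A_dim M0d] mult_carrier_mat[OF B_dim U0d] Q_dim]) (rule refl)
    also have "\<dots> = X1 *\<^sub>v (Q *\<^sub>v M y)" using X1d Q_dim My by simp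
    also have "\<dots> = X1 *\<^sub>v (Q1 *\<^sub>v y + Q2 *\<^sub>v Z y)" unfolding M_def using Qsplit[OF y zd] by simp
    also have "\<dots> = (X1 * Q1) *\<^sub>v y + (X1 * Q2) *\<^sub>v Z y"
      using X1d Q1d Q2d y zd by (simp add: mult_add_distrib_mat_vec)
    also have "\<dots> = K *\<^sub>v y" unfolding K_def X1Q2 zero_mat_mult_vec_helper[OF zd]
      using mult_carrier_mat[OF X1d Q1d] y by simp
    finally show ?thesis .
  qed
  have quad: "y \<bullet> ((transpose_mat L * P * L) *\<^sub>v y) = (L *\<^sub>v y) \<bullet> (P *\<^sub>v (L *\<^sub>v y))"
    if L: "L \<in> carrier_mat n n" and y: "y \<in> carrier_vec n" for L y
  proof -
    have "(transpose_mat L * P * L) *\<^sub>v y = transpose_mat L *\<^sub>v (P *\<^sub>v (L *\<^sub>v y))"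
      using L Pd y by (simp add: assoc_mult_mat_vec[of _ n n _ n])
    moreover have "(L *\<^sub>v y) \<bullet> (P *\<^sub>v (L *\<^sub>v y)) = y \<bullet> (transpose_mat L *\<^sub>v (P *\<^sub>v (L *\<^sub>v y)))"
      using transpose_vec_mult_scalar[of "transpose_mat L" n n "P *\<^sub>v (L *\<^sub>v y)" y] L Pd y by auto
    ultimately show ?thesis by simp
  qed
  have iter: "(g ^^ j) y = (K ^\<^sub>m j) *\<^sub>v y" if "y \<in> carrier_vec n" for j y
    using that
  proof (induction j arbitrary: y)
    case 0 then show ?case using Kd by simp
  next
    case (Suc j)
    have "(g ^^ Suc j) y = (g ^^ j) (g y)" by (simp add: funpow_Suc_right del: funpow.simps)
    also have "\<dots> = (K ^\<^sub>m j) *\<^sub>v (K *\<^sub>v y)" using Suc geq Kd by simp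
    also have "\<dots> = (K ^\<^sub>m Suc j) *\<^sub>v y"
      using assoc_mult_mat_vec[OF pow_carrier_mat[OF Kd, of j] Kd Suc.prems] by simp
    finally show ?case .
  qed
  have psd: "y \<bullet> (P *\<^sub>v y) \<ge> 0" if "y \<in> carrier_vec n" for y
  proof (cases "y = 0\<^sub>v n")
    case True then show ?thesis using Pd by simp
  next
    case False then show ?thesis using P_pd that unfolding sym_pos_def_mat_def by force
  qed
  have step1: "g y \<bullet> (P *\<^sub>v g y) \<le> y \<bullet> (P *\<^sub>v y) + \<epsilon>" if "y \<in> X" for y
  proof -
    have y: "y \<in> carrier_vec n" using that X_sub by auto
    have "g y \<bullet> (P *\<^sub>v g y) = y \<bullet> ((transpose_mat K * P * K) *\<^sub>v y)"
      using quad[OF Kd y] geq[OF y] by simp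
    also have "transpose_mat K * P * K = transpose_mat Q1 * transpose_mat X1 * P * X1 * Q1"
    proof -
      have W: "transpose_mat Q1 * transpose_mat X1 * P \<in> carrier_mat n n"
        using X1d Q1d Pd by auto
      have "transpose_mat K = transpose_mat Q1 * transpose_mat X1"
        unfolding K_def by (rule transpose_mult[OF X1d Q1d])
      then have "transpose_mat K * P * K = (transpose_mat Q1 * transpose_mat X1 * P) * (X1 * Q1)"
        unfolding K_def by simp
      also have "\<dots> = transpose_mat Q1 * transpose_mat X1 * P * X1 * Q1"
        by (rule assoc_mult_mat[OF W X1d Q1d, symmetric])
      finally show ?thesis .
    qed
    finally show ?thesis using c3[OF that] by simp
  qed
  have stepk: "(g ^^ k) y \<bullet> (P *\<^sub>v (g ^^ k) y) \<le> y \<bullet> (P *\<^sub>v y)" if "y \<in> X" for y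
  proof -
    have y: "y \<in> carrier_vec n" using that X_sub by auto
    have Kk: "K ^\<^sub>m k \<in> carrier_mat n n" using Kd by simp
    have "(g ^^ k) y \<bullet> (P *\<^sub>v (g ^^ k) y) = y \<bullet> ((transpose_mat (K ^\<^sub>m k) * P * K ^\<^sub>m k) *\<^sub>v y)"
      using quad[OF Kk y] iter[OF y] by simp
    moreover have "y \<bullet> ((P - transpose_mat (K ^\<^sub>m k) * P * K ^\<^sub>m k) *\<^sub>v y) \<ge> 0"
      using c4 y unfolding loewner_le_def K_def by auto
    moreover have "y \<bullet> ((P - transpose_mat (K ^\<^sub>m k) * P * K ^\<^sub>m k) *\<^sub>v y)
        = y \<bullet> (P *\<^sub>v y) - y \<bullet> ((transpose_mat (K ^\<^sub>m k) * P * K ^\<^sub>m k) *\<^sub>v y)"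
    proof -
      define R where "R = transpose_mat (K ^\<^sub>m k) * P * K ^\<^sub>m k"
      have R: "R \<in> carrier_mat n n" unfolding R_def using Kk Pd by auto
      have "(P - R) *\<^sub>v y = P *\<^sub>v y - R *\<^sub>v y" by (rule minus_mult_distrib_mat_vec[OF Pd R y])
      moreover have "y \<bullet> (P *\<^sub>v y - R *\<^sub>v y) = y \<bullet> (P *\<^sub>v y) - y \<bullet> (R *\<^sub>v y)"
        by (rule scalar_prod_minus_distrib[OF y mult_mat_vec_carrier[OF Pd y] mult_mat_vec_carrier[OF R y]])
      ultimately show ?thesis unfolding R_def by simp
    qed
    ultimately show ?thesis by simp
  qed
  show ?thesis
    unfolding kCBC_with_controller_def
    using k_pos \<gamma>_nonneg lam_nonneg \<epsilon>_nonneg gap c1 c2 psd X_sub step1 stepk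
    unfolding g_def by auto
qed

end
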